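(* Let $\Lambda^r_{\mathrm{nf}}$ be the set of normal resource $\lambda$-terms equipped with the resource partial metric $r$, and let $\mathrm{Ide}_r(\Lambda^r_{\mathrm{nf}})$ be the set of ideals of $(\Lambda^r_{\mathrm{nf}},\leq_r)$, ordered by inclusion. Then the partial metric $H^*_r$ quantifies the Scott topology of $(\mathrm{Ide}_r(\Lambda^r_{\mathrm{nf}}),\subseteq)$, i.e. $\mathcal O_\sigma=\mathcal O_{H^*_r}$.
   Context: Resource terms: $t::=x\mid\lambda x.t\mid t\langle t_1,\dots,t_k\rangle$ where $\langle t_1,\dots,t_k\rangle$ is a finite multiset ($k\geq0$; $\emptyset$ is the empty multiset). A normal resource term has the form $t=\lambda x_1\dots\lambda x_n.x\,b_1\dots b_m$ with each $b_i=\langle t_i^1,\dots,t_i^{m_i}\rangle$ a multiset of normal resource terms. Height: $h(t)=\max_{i,j}h(t_i^j)+1$ (max of empty set $=0$). The head occurrence $x$ of $t$ has height $1$; an occurrence inside $t_i^j$ has height (its height in $t_i^j$)$+1$. Truncation $t|_n$: if $h(t)\leq n$ then $t|_n=t$; otherwise replace every subterm $x\,b_1\dots b_m$ whose head occurrence $x$ is at height $n$ by $x\,\emptyset\dots\emptyset$. Resource partial metric: $r(t,u)=\inf\{2^{-n}\mid n\in\mathbb N,\ h(t),h(u)\geq n,\ t|_n=u|_n\}$. For a partial metric $p$: $x\leq_p y$ iff $p(x,y)\leq p(x,x)$; open balls $B^p_\epsilon(x)=\{y\mid p(y,x)<p(x,x)+\epsilon\}$; $\mathcal O_p$ = unions of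 open balls. An ideal is a lower directed (nonempty) subset. $H^*_r(A,B)=\max\{\sup_{a\in A}\inf_{a'\in A,\ a\leq_r a',\ b\in B}r(a',b),\ \sup_{b\in B}\inf_{b'\in B,\ b\leq_r b',\ a\in A}r(a,b')\}$. Scott topology of a poset: upper sets $U$ such that $x\in U$ implies $y\in U$ for some $y\ll x$, where $y\ll x$ iff every directed $\Delta$ with $x\leq\bigvee\Delta$ contains some $d\geq y$. *)

theory Defs
  imports Complex_Main "HOL-Library.Multiset"
begin

text \<open>NT k x [b1,...,bm] represents the normal resource term
  lambda x1 ... lambda xk. x b1 ... bm, where the head variable x is a de Bruijn
  index (so terms are taken up to alpha-equivalence) and each bag bi is a finite
  multiset of normal resource terms.\<close>

datatype nterm = NT nat nat "nterm multiset list"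

primrec height :: "nterm \<Rightarrow> nat" where
  "height (NT k x bs) =
     Suc (Max (insert 0 (\<Union> (set_mset ` set (map (image_mset height) bs)))))"

text \<open>Truncation t|_n: the subterms whose head occurrence lies at height n get all
  their bags replaced by empty bags (for n = 0 nothing changes).\<close>

primrec trunc :: "nterm \<Rightarrow> nat \<Rightarrow> nterm" where
  "trunc (NT k x bs) n =
     (if n = 0 then NT k x bs
      else if n = 1 then NT k x (map (\<lambda>_. {#}) bs)
      else NT k x (map (image_mset (\<lambda>t. trunc t (n - 1))) bs))"

text \<open>Resource partial metric.  The level n = 0 is regarded as always agreeing,
  i.e. r(t,u) = 1 when t and u do not agree at any positive level.\<close>

definition rpm :: "nterm \<Rightarrow> nterm \<Rightarrow> real" where
  "rpm t u = Inf ({(1/2) ^ n | n. 1 \<le> n \<and> n \<le> height t \<and> n \<le> height u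
                                 \<and> trunc t n = trunc u n} \<union> {1})"

definition pm_le :: "('a \<Rightarrow> 'a \<Rightarrow> real) \<Rightarrow> 'a \<Rightarrow> 'a \<Rightarrow> bool" where
  "pm_le p x y \<longleftrightarrow> p x y \<le> p x x"

definition pm_ball :: "'a set \<Rightarrow> ('a \<Rightarrow> 'a \<Rightarrow> real) \<Rightarrow> 'a \<Rightarrow> real \<Rightarrow> 'a set" where
  "pm_ball X p x \<epsilon> = {y \<in> X. p y x < p x x + \<epsilon>}"

definition pm_opens :: "'a set \<Rightarrow> ('a \<Rightarrow> 'a \<Rightarrow> real) \<Rightarrow> 'a set set" where
  "pm_opens X p = {U. \<exists>F. F \<subseteq> {pm_ball X p x \<epsilon> | x \<epsilon>. x \<in> X \<and> \<epsilon> > 0} \<and> U = \<Union>F}"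

definition r_ideal :: "nterm set \<Rightarrow> bool" where
  "r_ideal I \<longleftrightarrow> I \<noteq> {}
     \<and> (\<forall>a b. b \<in> I \<longrightarrow> pm_le rpm a b \<longrightarrow> a \<in> I)
     \<and> (\<forall>a\<in>I. \<forall>b\<in>I. \<exists>c\<in>I. pm_le rpm a c \<and> pm_le rpm b c)"

definition Ide_r :: "nterm set set" where
  "Ide_r = {I. r_ideal I}"

definition Hstar :: "nterm set \<Rightarrow> nterm set \<Rightarrow> real" where
  "Hstar A B = max
     (SUP a\<in>A. Inf {rpm a' b | a' b. a' \<in> A \<and> pm_le rpm a a' \<and> b \<in> B})
     (SUP b\<in>B. Inf {rpm a b' | a b'. b' \<in> B \<and> pm_le rpm b b' \<and> a \<in> A})"

definition directed_in :: "'a set \<Rightarrow> ('a \<Rightarrow> 'a \<Rightarrow> bool) \<Rightarrow> 'a set \<Rightarrow> bool" where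
  "directed_in P le D \<longleftrightarrow> D \<subseteq> P \<and> D \<noteq> {} \<and> (\<forall>a\<in>D. \<forall>b\<in>D. \<exists>c\<in>D. le a c \<and> le b c)"

definition is_lub :: "'a set \<Rightarrow> ('a \<Rightarrow> 'a \<Rightarrow> bool) \<Rightarrow> 'a set \<Rightarrow> 'a \<Rightarrow> bool" where
  "is_lub P le D s \<longleftrightarrow> s \<in> P \<and> (\<forall>d\<in>D. le d s)
      \<and> (\<forall>u\<in>P. (\<forall>d\<in>D. le d u) \<longrightarrow> le s u)"

definition way_below :: "'a set \<Rightarrow> ('a \<Rightarrow> 'a \<Rightarrow> bool) \<Rightarrow> 'a \<Rightarrow> 'a \<Rightarrow> bool" where
  "way_below P le y x \<longleftrightarrow> (\<forall>D s. directed_in P le D \<longrightarrow> is_lub P le D s \<longrightarrow> le x s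
        \<longrightarrow> (\<exists>d\<in>D. le y d))"

definition scott_opens :: "'a set \<Rightarrow> ('a \<Rightarrow> 'a \<Rightarrow> bool) \<Rightarrow> 'a set set" where
  "scott_opens P le = {U. U \<subseteq> P
      \<and> (\<forall>x\<in>U. \<forall>y\<in>P. le x y \<longrightarrow> y \<in> U)
      \<and> (\<forall>x\<in>U. \<exists>y\<in>U. way_below P le y x)}"

end

theory Submission
  imports Defs
begin

lemma trunc_trunc:
  "1 \<le> n \<Longrightarrow> n \<le> m \<Longrightarrow> trunc (trunc t m) n = trunc t n"
proof (induction t arbitrary: m n)
  case (NT k x bs)
  show ?case
  proof (cases "n = 1")
    case True
    then show ?thesis using NT.prems by auto
  next
    case False
    then have "n \<ge> 2" "m \<ge> 2" using NT.prems by auto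
    then have "trunc (trunc (NT k x bs) m) n =
       NT k x (map (image_mset (\<lambda>t. trunc (trunc t (m - 1)) (n - 1))) bs)"
      by (simp add: multiset.map_comp comp_def)
    also have "\<dots> = NT k x (map (image_mset (\<lambda>t. trunc t (n - 1))) bs)"
      using NT.IH \<open>n \<ge> 2\<close> NT.prems
      by (auto intro!: map_cong image_mset_cong)
    finally show ?thesis using \<open>n \<ge> 2\<close> by simp
  qed
qed

lemma height_ge1: "height t \<ge> 1"
  by (cases t) auto

definition Sset :: "nterm \<Rightarrow> nterm \<Rightarrow> nat set" where
  "Sset t u = {n. 1 \<le> n \<and> n \<le> height t \<and> n \<le> height u \<and> trunc t n = trunc u n}"

definition mc :: "nterm \<Rightarrow> nterm \<Rightarrow> nat" where
  "mc t u = Max (insert 0 (Sset t u))"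

lemma Sset_fin: "finite (Sset t u)"
  by (rule finite_subset[of _ "{..height t}"]) (auto simp: Sset_def)

lemma mc_le: "mc t u \<le> height t" "mc t u \<le> height u"
  using Sset_fin[of t u] by (auto simp: mc_def Sset_def)

lemma mc_sym: "mc t u = mc u t"
proof -
  have "Sset t u = Sset u t" by (auto simp: Sset_def)
  then show ?thesis by (simp add: mc_def)
qed

lemma mc_in: "mc t u > 0 \<Longrightarrow> mc t u \<in> Sset t u"
proof -
  assume "mc t u > 0"
  have "mc t u \<in> insert 0 (Sset t u)" unfolding mc_def
    using Sset_fin by (intro Max_in) auto
  then show ?thesis using \<open>mc t u > 0\<close> by auto
qed

lemma mc_ge: "n \<in> Sset t u \<Longrightarrow> n \<le> mc t u"
  unfolding mc_def using Sset_fin by auto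

lemma mc_trunc: "1 \<le> k \<Longrightarrow> k \<le> mc t u \<Longrightarrow> trunc t k = trunc u k"
proof -
  assume k: "1 \<le> k" "k \<le> mc t u"
  then have "mc t u \<in> Sset t u" using mc_in by auto
  then have "trunc t (mc t u) = trunc u (mc t u)" by (simp add: Sset_def)
  then show ?thesis using trunc_trunc[of k "mc t u" t] trunc_trunc[of k "mc t u" u] k by simp
qed

lemma mc_self: "mc t t = height t"
proof -
  have "height t \<in> Sset t t" using height_ge1[of t] by (simp add: Sset_def)
  then show ?thesis using mc_ge mc_le by (meson le_antisym)
qed

lemma mc_ultra: "min (mc t u) (mc u v) \<le> mc t v"
proof (cases "min (mc t u) (mc u v) = 0")
  case True then show ?thesis by simp
next
  case False
  define k where "k = min (mc t u) (mc u v)"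
  have "1 \<le> k" using False k_def by simp
  have "trunc t k = trunc u k" using mc_trunc[of k t u] \<open>1 \<le> k\<close> k_def by simp
  moreover have "trunc u k = trunc v k" using mc_trunc[of k u v] \<open>1 \<le> k\<close> k_def by simp
  moreover have "k \<le> height t" "k \<le> height v" using mc_le[of t u] mc_le[of u v] k_def by auto
  ultimately have "k \<in> Sset t v" using \<open>1 \<le> k\<close> by (simp add: Sset_def)
  then show ?thesis using mc_ge k_def by simp
qed

lemma rpm_mc: "rpm t u = (1/2) ^ mc t u"
proof -
  let ?X = "{(1/2) ^ n | n. 1 \<le> n \<and> n \<le> height t \<and> n \<le> height u
                                 \<and> trunc t n = trunc u n} \<union> {1::real}"
  have mem: "(1/2) ^ mc t u \<in> ?X"
  proof (cases "mc t u = 0")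
    case True then show ?thesis by simp
  next
    case False
    then have "mc t u \<in> Sset t u" using mc_in by simp
    then show ?thesis by (auto simp: Sset_def)
  qed
  have low: "(1/2) ^ mc t u \<le> x" if "x \<in> ?X" for x
  proof -
    { fix n assume "1 \<le> n \<and> n \<le> height t \<and> n \<le> height u \<and> trunc t n = trunc u n"
      then have "n \<in> Sset t u" by (simp add: Sset_def)
      then have "n \<le> mc t u" by (rule mc_ge)
      then have "(1/2::real) ^ mc t u \<le> (1/2) ^ n" by (simp add: power_decreasing) }
    moreover have "(1/2::real) ^ mc t u \<le> 1" by (simp add: power_le_one)
    ultimately show ?thesis using that by auto
  qed
  show ?thesis unfolding rpm_def by (rule cInf_eq_minimum[OF mem low])
qed

lemma pm_le_mc: "pm_le rpm t u \<longleftrightarrow> mc t u = height t"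
proof -
  have "pm_le rpm t u \<longleftrightarrow> (1/2::real) ^ mc t u \<le> (1/2) ^ height t"
    by (simp add: pm_le_def rpm_mc mc_self)
  also have "\<dots> \<longleftrightarrow> height t \<le> mc t u" by (simp add: power_decreasing_iff)
  also have "\<dots> \<longleftrightarrow> mc t u = height t" using mc_le[of t u] by auto
  finally show ?thesis .
qed

lemma pm_le_refl: "pm_le rpm a a"
  by (simp add: pm_le_def)

lemma pm_le_trans: "pm_le rpm a b \<Longrightarrow> pm_le rpm b c \<Longrightarrow> pm_le rpm a c"
  unfolding pm_le_mc
  using mc_ultra[of a b c] mc_le[of a b] mc_le[of a c] by auto

lemma rpm_sym: "rpm a b = rpm b a"
  by (simp add: rpm_mc mc_sym)

lemma rpm_nonneg: "rpm a b \<ge> 0"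
  by (simp add: rpm_mc)

lemma rpm_mono: "pm_le rpm a a' \<Longrightarrow> rpm a' b \<le> rpm a b"
proof -
  assume "pm_le rpm a a'"
  then have "mc a a' = height a" by (simp add: pm_le_mc)
  then have "mc a b \<le> mc a' b" using mc_ultra[of a' a b] mc_sym[of a' a] mc_le[of a b] by auto
  then show ?thesis by (simp add: rpm_mc power_decreasing)
qed

lemma rpm_self_le: "pm_le rpm a y \<Longrightarrow> pm_le rpm b y \<Longrightarrow> rpm y y \<le> rpm a b"
proof -
  assume "pm_le rpm a y" "pm_le rpm b y"
  have "rpm y y \<le> rpm y b" using rpm_mono[OF \<open>pm_le rpm b y\<close>, of y] rpm_sym by simp
  also have "\<dots> \<le> rpm a b" using rpm_mono[OF \<open>pm_le rpm a y\<close>, of b] .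
  finally show ?thesis .
qed

lemma rpm_close: "pm_le rpm b y \<Longrightarrow> rpm a b < 2 * rpm y y \<Longrightarrow> pm_le rpm y a"
proof -
  assume hb: "pm_le rpm b y" and lt: "rpm a b < 2 * rpm y y"
  have hy: "height y \<ge> 1" by (rule height_ge1)
  have "(1/2::real) ^ mc a b < 2 * (1/2) ^ height y" using lt by (simp add: rpm_mc mc_self)
  also have "2 * (1/2::real) ^ height y = (1/2) ^ (height y - 1)"
    using hy by (cases "height y") auto
  finally have "(1/2::real) ^ mc a b < (1/2) ^ (height y - 1)" .
  then have "height y - 1 < mc a b" by (simp add: power_strict_decreasing_iff)
  then have m1: "height y \<le> mc a b" by simp
  have "mc b y = height b" using hb by (simp add: pm_le_mc)
  moreover have "mc a b \<le> height b" by (rule mc_le)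
  ultimately have "height y \<le> min (mc a b) (mc b y)" using m1 by simp
  then have "height y \<le> mc a y" using mc_ultra[of a b y] by linarith
  then show ?thesis using mc_le[of y a] mc_sym[of a y] by (simp add: pm_le_mc)
qed


definition dn :: "nterm \<Rightarrow> nterm set" where
  "dn y = {a. pm_le rpm a y}"

lemma dn_ideal: "dn y \<in> Ide_r"
  unfolding Ide_r_def r_ideal_def dn_def
  using pm_le_refl pm_le_trans by blast

lemma dn_sub: "r_ideal I \<Longrightarrow> y \<in> I \<Longrightarrow> dn y \<subseteq> I"
  unfolding r_ideal_def dn_def by blast

lemma dn_mem: "y \<in> dn y"
  by (simp add: dn_def pm_le_refl)

definition cd :: "nterm set \<Rightarrow> nterm set \<Rightarrow> real" where
  "cd A B = Inf {rpm a b | a b. a \<in> A \<and> b \<in> B}"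

lemma cd_lower: "a \<in> A \<Longrightarrow> b \<in> B \<Longrightarrow> cd A B \<le> rpm a b"
  unfolding cd_def
  by (rule cInf_lower) (auto intro: bdd_belowI[of _ 0] simp: rpm_nonneg)

lemma cd_less: "cd A B < r \<Longrightarrow> A \<noteq> {} \<Longrightarrow> B \<noteq> {} \<Longrightarrow> \<exists>a\<in>A. \<exists>b\<in>B. rpm a b < r"
proof -
  assume "cd A B < r" "A \<noteq> {}" "B \<noteq> {}"
  then have "\<exists>x\<in>{rpm a b | a b. a \<in> A \<and> b \<in> B}. x < r"
    unfolding cd_def
    by (subst cInf_less_iff[symmetric]) (auto intro: bdd_belowI[of _ 0] simp: rpm_nonneg)
  then show ?thesis by auto
qed

lemma cd_mono: "A \<subseteq> A' \<Longrightarrow> A \<noteq> {} \<Longrightarrow> B \<noteq> {} \<Longrightarrow> cd A' B \<le> cd A B"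
  unfolding cd_def
  by (rule cInf_superset_mono) (auto intro: bdd_belowI[of _ 0] simp: rpm_nonneg)

lemma inf_restrict:
  fixes f :: "nterm \<Rightarrow> nterm \<Rightarrow> real"
  assumes A: "r_ideal A" and B: "B \<noteq> {}" and a0: "a0 \<in> A"
    and f0: "\<And>a b. f a b \<ge> 0"
    and fm: "\<And>a a' b. pm_le rpm a a' \<Longrightarrow> f a' b \<le> f a b"
  shows "Inf {f a' b | a' b. a' \<in> A \<and> pm_le rpm a0 a' \<and> b \<in> B}
       = Inf {f a b | a b. a \<in> A \<and> b \<in> B}"
proof (rule order.antisym)
  have ne: "{f a' b | a' b. a' \<in> A \<and> pm_le rpm a0 a' \<and> b \<in> B} \<noteq> {}"
    using a0 B pm_le_refl by blast
  show "Inf {f a' b | a' b. a' \<in> A \<and> pm_le rpm a0 a' \<and> b \<in> B}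
       \<le> Inf {f a b | a b. a \<in> A \<and> b \<in> B}"
  proof (rule cInf_greatest)
    show "{f a b | a b. a \<in> A \<and> b \<in> B} \<noteq> {}" using a0 B by blast
  next
    fix x assume "x \<in> {f a b | a b. a \<in> A \<and> b \<in> B}"
    then obtain a b where ab: "a \<in> A" "b \<in> B" "x = f a b" by blast
    obtain c where c: "c \<in> A" "pm_le rpm a0 c" "pm_le rpm a c"
      using A a0 ab(1) unfolding r_ideal_def by blast
    have "Inf {f a' b | a' b. a' \<in> A \<and> pm_le rpm a0 a' \<and> b \<in> B} \<le> f c b"
      by (rule cInf_lower) (use c ab in \<open>auto intro: bdd_belowI[of _ 0] simp: f0\<close>)
    also have "\<dots> \<le> x" using fm[OF c(3)] ab by simp
    finally show "Inf {f a' b | a' b. a' \<in> A \<and> pm_le rpm a0 a' \<and> b \<in> B} \<le> x" .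
  qed
next
  show "Inf {f a b | a b. a \<in> A \<and> b \<in> B}
       \<le> Inf {f a' b | a' b. a' \<in> A \<and> pm_le rpm a0 a' \<and> b \<in> B}"
    by (rule cInf_superset_mono) (use a0 B pm_le_refl in \<open>auto intro: bdd_belowI[of _ 0] simp: f0\<close>)
qed

lemma cd_sym: "cd A B = cd B A"
proof -
  have "{rpm a b | a b. a \<in> A \<and> b \<in> B} = {rpm b a | b a. b \<in> B \<and> a \<in> A}"
    using rpm_sym by blast
  then show ?thesis by (simp add: cd_def)
qed

lemma Hstar_cd:
  assumes A: "r_ideal A" and B: "r_ideal B"
  shows "Hstar A B = cd A B"
proof -
  have An: "A \<noteq> {}" and Bn: "B \<noteq> {}" using A B by (auto simp: r_ideal_def)
  have 1: "Inf {rpm a' b | a' b. a' \<in> A \<and> pm_le rpm a a' \<and> b \<in> B} = cd A B" if "a \<in> A" for a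
    unfolding cd_def
    by (rule inf_restrict[OF A Bn that]) (auto simp: rpm_nonneg rpm_mono)
  have 2: "Inf {rpm a b' | a b'. b' \<in> B \<and> pm_le rpm b b' \<and> a \<in> A} = cd A B" if "b \<in> B" for b
  proof -
    have "{rpm a b' | a b'. b' \<in> B \<and> pm_le rpm b b' \<and> a \<in> A}
        = {(\<lambda>x y. rpm y x) b' a | b' a. b' \<in> B \<and> pm_le rpm b b' \<and> a \<in> A}" by blast
    also have "Inf \<dots> = Inf {(\<lambda>x y. rpm y x) b' a | b' a. b' \<in> B \<and> a \<in> A}"
      by (rule inf_restrict[OF B An that]) (auto simp: rpm_nonneg rpm_sym intro: rpm_mono)
    also have "{(\<lambda>x y. rpm y x) b' a | b' a. b' \<in> B \<and> a \<in> A} = {rpm a b | a b. a \<in> A \<and> b \<in> B}"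
      by blast
    finally show ?thesis by (simp add: cd_def)
  qed
  have "(SUP a\<in>A. Inf {rpm a' b | a' b. a' \<in> A \<and> pm_le rpm a a' \<and> b \<in> B}) = (SUP a\<in>A. cd A B)"
    using 1 by (intro SUP_cong) auto
  moreover have "(SUP b\<in>B. Inf {rpm a b' | a b'. b' \<in> B \<and> pm_le rpm b b' \<and> a \<in> A}) = (SUP b\<in>B. cd A B)"
    using 2 by (intro SUP_cong) auto
  ultimately show ?thesis unfolding Hstar_def using An Bn by simp
qed


lemma ideal_ne: "r_ideal I \<Longrightarrow> I \<noteq> {}"
  by (simp add: r_ideal_def)

lemma cd_dn_self: "cd (dn y) (dn y) = rpm y y"
proof (rule order.antisym)
  show "cd (dn y) (dn y) \<le> rpm y y" by (rule cd_lower[OF dn_mem dn_mem])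
  show "rpm y y \<le> cd (dn y) (dn y)" unfolding cd_def
    by (rule cInf_greatest) (use dn_mem in \<open>auto simp: dn_def intro: rpm_self_le\<close>)
qed

lemma rpm_pos: "rpm y y > 0"
  by (simp add: rpm_mc)

lemma ball_dn: "pm_ball Ide_r Hstar (dn y) (rpm y y) = {Z \<in> Ide_r. y \<in> Z}"
proof -
  have dI: "r_ideal (dn y)" using dn_ideal by (simp add: Ide_r_def)
  have "Z \<in> pm_ball Ide_r Hstar (dn y) (rpm y y) \<longleftrightarrow> y \<in> Z" if Z: "Z \<in> Ide_r" for Z
  proof -
    have ZI: "r_ideal Z" using Z by (simp add: Ide_r_def)
    have "Z \<in> pm_ball Ide_r Hstar (dn y) (rpm y y) \<longleftrightarrow> cd Z (dn y) < 2 * rpm y y"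
      using Z by (simp add: pm_ball_def Hstar_cd[OF ZI dI] Hstar_cd[OF dI dI] cd_dn_self)
    also have "\<dots> \<longleftrightarrow> y \<in> Z"
    proof
      assume "cd Z (dn y) < 2 * rpm y y"
      then obtain a b where "a \<in> Z" "b \<in> dn y" "rpm a b < 2 * rpm y y"
        using cd_less ideal_ne[OF ZI] dn_mem by blast
      then have "pm_le rpm y a" using rpm_close by (auto simp: dn_def)
      then show "y \<in> Z" using ZI \<open>a \<in> Z\<close> unfolding r_ideal_def by blast
    next
      assume "y \<in> Z"
      then have "cd Z (dn y) \<le> rpm y y" using cd_lower dn_mem by blast
      then show "cd Z (dn y) < 2 * rpm y y" using rpm_pos[of y] by linarith
    qed
    finally show ?thesis .
  qed
  then show ?thesis by (auto simp: pm_ball_def)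
qed

lemma union_directed_ideal:
  assumes "directed_in Ide_r (\<subseteq>) D"
  shows "\<Union>D \<in> Ide_r"
proof -
  have D: "D \<subseteq> Ide_r" "D \<noteq> {}" "\<forall>a\<in>D. \<forall>b\<in>D. \<exists>c\<in>D. a \<subseteq> c \<and> b \<subseteq> c"
    using assms by (auto simp: directed_in_def)
  have "\<Union>D \<noteq> {}"
  proof -
    obtain d where "d \<in> D" using D(2) by blast
    then have "d \<noteq> {}" using D(1) by (auto simp: Ide_r_def r_ideal_def)
    then show ?thesis using \<open>d \<in> D\<close> by blast
  qed
  moreover have "\<forall>a b. b \<in> \<Union>D \<longrightarrow> pm_le rpm a b \<longrightarrow> a \<in> \<Union>D"
    using D(1) by (auto simp: Ide_r_def r_ideal_def)
  moreover have "\<forall>a\<in>\<Union>D. \<forall>b\<in>\<Union>D. \<exists>c\<in>\<Union>D. pm_le rpm a c \<and> pm_le rpm b c"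
  proof (intro ballI)
    fix a b assume "a \<in> \<Union>D" "b \<in> \<Union>D"
    then obtain d1 d2 where "d1 \<in> D" "d2 \<in> D" "a \<in> d1" "b \<in> d2" by blast
    then obtain d3 where "d3 \<in> D" "d1 \<subseteq> d3" "d2 \<subseteq> d3" using D(3) by blast
    then have "r_ideal d3" using D(1) by (auto simp: Ide_r_def)
    then obtain c where "c \<in> d3" "pm_le rpm a c" "pm_le rpm b c"
      using \<open>a \<in> d1\<close> \<open>b \<in> d2\<close> \<open>d1 \<subseteq> d3\<close> \<open>d2 \<subseteq> d3\<close> unfolding r_ideal_def by blast
    then show "\<exists>c\<in>\<Union>D. pm_le rpm a c \<and> pm_le rpm b c" using \<open>d3 \<in> D\<close> by blast
  qed
  ultimately show ?thesis by (simp add: Ide_r_def r_ideal_def)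
qed

lemma dn_way_below:
  assumes "a \<in> W"
  shows "way_below Ide_r (\<subseteq>) (dn a) W"
  unfolding way_below_def
proof (intro allI impI)
  fix D s assume dir: "directed_in Ide_r (\<subseteq>) D" and lub: "is_lub Ide_r (\<subseteq>) D s" and Ws: "W \<subseteq> s"
  have "\<Union>D \<in> Ide_r" by (rule union_directed_ideal[OF dir])
  then have "s \<subseteq> \<Union>D" using lub by (auto simp: is_lub_def)
  then obtain d where "d \<in> D" "a \<in> d" using Ws assms by blast
  moreover have "r_ideal d" using dir \<open>d \<in> D\<close> by (auto simp: directed_in_def Ide_r_def)
  ultimately show "\<exists>d\<in>D. dn a \<subseteq> d" using dn_sub by blast
qed

lemma ball_scott:
  assumes X: "X \<in> Ide_r" and e: "\<epsilon> > 0"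
  shows "pm_ball Ide_r Hstar X \<epsilon> \<in> scott_opens Ide_r (\<subseteq>)"
proof -
  have XI: "r_ideal X" using X by (simp add: Ide_r_def)
  have up: "Z' \<in> pm_ball Ide_r Hstar X \<epsilon>"
    if "Z \<in> pm_ball Ide_r Hstar X \<epsilon>" "Z' \<in> Ide_r" "Z \<subseteq> Z'" for Z Z'
  proof -
    have ZI: "r_ideal Z" "r_ideal Z'" using that by (auto simp: pm_ball_def Ide_r_def)
    have "cd Z' X \<le> cd Z X" using cd_mono[OF that(3) ideal_ne[OF ZI(1)] ideal_ne[OF XI]] .
    then show ?thesis using that by (auto simp: pm_ball_def Hstar_cd[OF ZI(1) XI] Hstar_cd[OF ZI(2) XI])
  qed
  have wb: "\<exists>Y\<in>pm_ball Ide_r Hstar X \<epsilon>. way_below Ide_r (\<subseteq>) Y Z"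
    if "Z \<in> pm_ball Ide_r Hstar X \<epsilon>" for Z
  proof -
    have ZI: "r_ideal Z" using that by (auto simp: pm_ball_def Ide_r_def)
    have "cd Z X < Hstar X X + \<epsilon>" using that by (simp add: pm_ball_def Hstar_cd[OF ZI XI])
    then obtain a b where ab: "a \<in> Z" "b \<in> X" "rpm a b < Hstar X X + \<epsilon>"
      using cd_less ideal_ne[OF ZI] ideal_ne[OF XI] by blast
    have aI: "r_ideal (dn a)" using dn_ideal by (simp add: Ide_r_def)
    have "Hstar (dn a) X = cd (dn a) X" by (rule Hstar_cd[OF aI XI])
    also have "\<dots> \<le> rpm a b" by (rule cd_lower[OF dn_mem ab(2)])
    finally have "dn a \<in> pm_ball Ide_r Hstar X \<epsilon>" using ab dn_ideal by (simp add: pm_ball_def)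
    then show ?thesis using dn_way_below[OF ab(1)] by blast
  qed
  show ?thesis unfolding scott_opens_def using up wb by (auto simp: pm_ball_def)
qed

theorem mainTheorem12:
  shows "scott_opens Ide_r (\<subseteq>) = pm_opens Ide_r Hstar"
proof
  show "scott_opens Ide_r (\<subseteq>) \<subseteq> pm_opens Ide_r Hstar"
  proof
    fix U assume U: "U \<in> scott_opens Ide_r (\<subseteq>)"
    then have UP: "U \<subseteq> Ide_r" and Uup: "\<forall>x\<in>U. \<forall>y\<in>Ide_r. x \<subseteq> y \<longrightarrow> y \<in> U"
      and Uwb: "\<forall>x\<in>U. \<exists>y\<in>U. way_below Ide_r (\<subseteq>) y x"
      by (auto simp: scott_opens_def)
    define F where "F = {pm_ball Ide_r Hstar (dn y) (rpm y y) | y. dn y \<in> U}"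
    have "F \<subseteq> {pm_ball Ide_r Hstar x \<epsilon> | x \<epsilon>. x \<in> Ide_r \<and> \<epsilon> > 0}"
    proof
      fix B assume "B \<in> F"
      then obtain y where "B = pm_ball Ide_r Hstar (dn y) (rpm y y)" unfolding F_def by blast
      moreover have "dn y \<in> Ide_r" "rpm y y > 0" by (rule dn_ideal, rule rpm_pos)
      ultimately show "B \<in> {pm_ball Ide_r Hstar x \<epsilon> | x \<epsilon>. x \<in> Ide_r \<and> \<epsilon> > 0}" by blast
    qed
    moreover have "U = \<Union>F"
    proof
      show "U \<subseteq> \<Union>F"
      proof
        fix X assume "X \<in> U"
        then obtain Y where "Y \<in> U" and wY: "way_below Ide_r (\<subseteq>) Y X" using Uwb by blast
        have XI: "r_ideal X" using UP \<open>X \<in> U\<close> by (auto simp: Ide_r_def)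
        have dir: "directed_in Ide_r (\<subseteq>) (dn ` X)"
          unfolding directed_in_def
        proof (intro conjI ballI)
          show "dn ` X \<subseteq> Ide_r" using dn_ideal by blast
          show "dn ` X \<noteq> {}" using ideal_ne[OF XI] by blast
        next
          fix a b assume "a \<in> dn ` X" "b \<in> dn ` X"
          then obtain x1 x2 where "x1 \<in> X" "x2 \<in> X" "a = dn x1" "b = dn x2" by blast
          then obtain c where "c \<in> X" "pm_le rpm x1 c" "pm_le rpm x2 c"
            using XI unfolding r_ideal_def by blast
          then have "a \<subseteq> dn c" "b \<subseteq> dn c" using \<open>a = dn x1\<close> \<open>b = dn x2\<close>
            by (auto simp: dn_def intro: pm_le_trans)
          then show "\<exists>c\<in>dn ` X. a \<subseteq> c \<and> b \<subseteq> c" using \<open>c \<in> X\<close> by blast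
        qed
        have lub: "is_lub Ide_r (\<subseteq>) (dn ` X) X"
          unfolding is_lub_def
        proof (intro conjI ballI impI)
          show "X \<in> Ide_r" using UP \<open>X \<in> U\<close> by blast
        next
          fix d assume "d \<in> dn ` X" then show "d \<subseteq> X" using dn_sub[OF XI] by blast
        next
          fix u assume "\<forall>d\<in>dn ` X. d \<subseteq> u"
          then show "X \<subseteq> u" using dn_mem by blast
        qed
        obtain x where "x \<in> X" "Y \<subseteq> dn x"
          using wY dir lub unfolding way_below_def by blast
        then have "dn x \<in> U" using Uup \<open>Y \<in> U\<close> dn_ideal[of x] by simp
        moreover have "X \<in> pm_ball Ide_r Hstar (dn x) (rpm x x)"
          using UP \<open>X \<in> U\<close> \<open>x \<in> X\<close> by (simp add: ball_dn subset_iff)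
        ultimately show "X \<in> \<Union>F" unfolding F_def by blast
      qed
    next
      show "\<Union>F \<subseteq> U"
      proof
        fix Z assume "Z \<in> \<Union>F"
        then obtain y where "dn y \<in> U" "Z \<in> pm_ball Ide_r Hstar (dn y) (rpm y y)"
          unfolding F_def by blast
        then have "Z \<in> Ide_r" "y \<in> Z" using ball_dn by auto
        then have "dn y \<subseteq> Z" using dn_sub by (auto simp: Ide_r_def)
        then show "Z \<in> U" using Uup \<open>dn y \<in> U\<close> \<open>Z \<in> Ide_r\<close> by blast
      qed
    qed
    ultimately show "U \<in> pm_opens Ide_r Hstar" unfolding pm_opens_def by blast
  qed
next
  show "pm_opens Ide_r Hstar \<subseteq> scott_opens Ide_r (\<subseteq>)"
  proof
    fix U assume "U \<in> pm_opens Ide_r Hstar"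
    then obtain F where F: "F \<subseteq> {pm_ball Ide_r Hstar x \<epsilon> | x \<epsilon>. x \<in> Ide_r \<and> \<epsilon> > 0}" "U = \<Union>F"
      unfolding pm_opens_def by blast
    have FS: "\<And>B. B \<in> F \<Longrightarrow> B \<in> scott_opens Ide_r (\<subseteq>)"
    proof -
      fix B assume "B \<in> F"
      then obtain x \<epsilon> where "B = pm_ball Ide_r Hstar x \<epsilon>" "x \<in> Ide_r" "\<epsilon> > 0" using F(1) by blast
      then show "B \<in> scott_opens Ide_r (\<subseteq>)" using ball_scott by simp
    qed
    show "U \<in> scott_opens Ide_r (\<subseteq>)"
      unfolding scott_opens_def
    proof (intro CollectI conjI ballI allI impI)
      show "U \<subseteq> Ide_r"
      proof
        fix x assume "x \<in> U"
        then obtain B where "B \<in> F" "x \<in> B" using F(2) by blast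
        then show "x \<in> Ide_r" using FS[OF \<open>B \<in> F\<close>] unfolding scott_opens_def by blast
      qed
    next
      fix x y assume "x \<in> U" "y \<in> Ide_r" "x \<subseteq> y"
      then obtain B where "B \<in> F" "x \<in> B" using F(2) by blast
      then have "y \<in> B" using FS[OF \<open>B \<in> F\<close>] \<open>y \<in> Ide_r\<close> \<open>x \<subseteq> y\<close> by (auto simp: scott_opens_def)
      then show "y \<in> U" using F(2) \<open>B \<in> F\<close> by blast
    next
      fix x assume "x \<in> U"
      then obtain B where "B \<in> F" "x \<in> B" using F(2) by blast
      then obtain y where "y \<in> B" "way_below Ide_r (\<subseteq>) y x"
        using FS[OF \<open>B \<in> F\<close>] by (auto simp: scott_opens_def)
      then show "\<exists>y\<in>U. way_below Ide_r (\<subseteq>) y x" using F(2) \<open>B \<in> F\<close> by blast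
    qed
  qed
qed

end
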